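(* Let $X\in\mathbb{R}^{n\times n}$ be a matrix all of whose entries are non-zero. Then the appraisal network $G(X)$ satisfies social balance if and only if (S1) $X_{ii}>0$ for every $i\in\{1,\dots,n\}$, and (S3) $\operatorname{sign}(X_{i*})=\pm\operatorname{sign}(X_{j*})$ for all $i,j\in\{1,\dots,n\}$. Moreover, if $G(X)$ satisfies social balance, then $X$ is sign-symmetric, i.e., $\operatorname{sign}(X)=\operatorname{sign}(X)^{\top}$.
   Context: For a matrix $X$, $X_{i*}$ denotes its $i$-th row and $\operatorname{sign}(X)$ is the entry-wise sign ($1$ for positive, $-1$ for negative, $0$ for zero entries). $G(X)$ is the weighted digraph with (possibly negative) adjacency matrix $X$. $G(X)$ satisfies social balance (is structurally balanced) if (S1) $X_{ii}>0$ for all $i$, and (S2) $\operatorname{sign}(X_{ij})\operatorname{sign}(X_{jk})\operatorname{sign}(X_{ki})=1$ for all $i,j,k\in\{1,\dots,n\}$. *)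

theory Defs
  imports "HOL-Analysis.Analysis"
begin

definition sign_mat :: "real^'n^'m \<Rightarrow> real^'n^'m" where
  "sign_mat X = (\<chi> i j. sgn (X $ i $ j))"

definition social_balance :: "real^'n^'n \<Rightarrow> bool" where
  "social_balance X \<longleftrightarrow>
     (\<forall>i. X $ i $ i > 0) \<and>
     (\<forall>i j k. sgn (X $ i $ j) * sgn (X $ j $ k) * sgn (X $ k $ i) = 1)"

end

theory Submission
  imports Defs
begin

lemma sm_nth[simp]: "sign_mat X $ i $ k = sgn (X $ i $ k)"
  by (simp add: sign_mat_def)

lemma sgn_pm: "(x::real) \<noteq> 0 \<Longrightarrow> sgn x = 1 \<or> sgn x = -1"
  by (simp add: sgn_real_def)

theorem lemma2p2:
  fixes X :: "real^'n^'n"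
  assumes nz: "\<forall>i j. X $ i $ j \<noteq> 0"
  shows "(social_balance X \<longleftrightarrow>
           ((\<forall>i. X $ i $ i > 0) \<and>
            (\<forall>i j. sign_mat X $ i = sign_mat X $ j \<or> sign_mat X $ i = - (sign_mat X $ j))))
         \<and> (social_balance X \<longrightarrow> sign_mat X = transpose (sign_mat X))"
proof -
  define s where "s i j = sgn (X $ i $ j)" for i j
  have pm: "s i j = 1 \<or> s i j = -1" for i j unfolding s_def using nz sgn_pm by blast
  have sq: "s i j * s i j = 1" for i j using pm[of i j] by auto
  have roweq: "(sign_mat X $ i = sign_mat X $ j) \<longleftrightarrow> (\<forall>k. s i k = s j k)" for i j
    by (simp add: vec_eq_iff s_def)
  have rowneg: "(sign_mat X $ i = - (sign_mat X $ j)) \<longleftrightarrow> (\<forall>k. s i k = - s j k)" for i j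
    by (simp add: vec_eq_iff s_def)
  have F: "(\<forall>i j. s i j = s j i) \<and> (\<forall>i j k. s i k = s i j * s j k)" if sb: "social_balance X"
  proof -
    have diag: "s i i = 1" for i using sb by (simp add: social_balance_def s_def)
    have bal: "s i j * s j k * s k i = 1" for i j k using sb by (simp add: social_balance_def s_def)
    have sym: "s i j = s j i" for i j
      using bal[of i j i] diag[of i] pm[of i j] pm[of j i] by auto
    have "s i k = s i j * s j k" for i j k
      using bal[of i j k] sym[of k i] pm[of i j] pm[of j k] pm[of i k] by auto
    with sym show ?thesis by blast
  qed
  have A: "social_balance X \<longleftrightarrow>
           ((\<forall>i. X $ i $ i > 0) \<and>
            (\<forall>i j. sign_mat X $ i = sign_mat X $ j \<or> sign_mat X $ i = - (sign_mat X $ j)))"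
  proof
    assume sb: "social_balance X"
    note f = F[OF sb]
    have "sign_mat X $ i = sign_mat X $ j \<or> sign_mat X $ i = - (sign_mat X $ j)" for i j
    proof (cases "s i j = 1")
      case True
      have "\<forall>k. s i k = s j k"
      proof
        fix k show "s i k = s j k" using f True by (metis mult_1)
      qed
      then show ?thesis unfolding roweq by blast
    next
      case False
      then have "s i j = -1" using pm by blast
      have "\<forall>k. s i k = - s j k"
      proof
        fix k show "s i k = - s j k" using f \<open>s i j = -1\<close> by (metis mult_minus1)
      qed
      then show ?thesis unfolding rowneg by blast
    qed
    with sb show "(\<forall>i. X $ i $ i > 0) \<and>
            (\<forall>i j. sign_mat X $ i = sign_mat X $ j \<or> sign_mat X $ i = - (sign_mat X $ j))"
      by (simp add: social_balance_def)
  next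
    assume h: "(\<forall>i. X $ i $ i > 0) \<and>
            (\<forall>i j. sign_mat X $ i = sign_mat X $ j \<or> sign_mat X $ i = - (sign_mat X $ j))"
    have diag: "s i i = 1" for i using h by (simp add: s_def)
    have rel: "\<exists>c. (c = 1 \<or> c = -1) \<and> (\<forall>k. s i k = c * s j k)" for i j
    proof -
      have "sign_mat X $ i = sign_mat X $ j \<or> sign_mat X $ i = - (sign_mat X $ j)" using h by blast
      then show ?thesis
      proof
        assume "sign_mat X $ i = sign_mat X $ j"
        then have "\<forall>k. s i k = 1 * s j k" using roweq by simp
        then show ?thesis by blast
      next
        assume "sign_mat X $ i = - (sign_mat X $ j)"
        then have "\<forall>k. s i k = (-1) * s j k" using rowneg by simp
        then show ?thesis by blast
      qed
    qed
    have sym: "s i j = s j i" for i j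
    proof -
      obtain c where c: "c = 1 \<or> c = -1" "\<forall>k. s i k = c * s j k" using rel by blast
      have "s i j = c" using c(2)[rule_format, of j] diag[of j] by simp
      moreover have "1 = c * s j i" using c(2)[rule_format, of i] diag[of i] by simp
      ultimately show ?thesis using c(1) by auto
    qed
    have tr: "s i k = s i j * s j k" for i j k
    proof -
      obtain c where c: "c = 1 \<or> c = -1" "\<forall>k. s i k = c * s j k" using rel by blast
      have "s i j = c" using c(2)[rule_format, of j] diag[of j] by simp
      then show ?thesis using c(2)[rule_format, of k] by simp
    qed
    have "s i j * s j k * s k i = 1" for i j k
    proof -
      have "s i j * s j k * s k i = s i k * s i k" using tr[of i k j] sym[of k i] by simp
      then show ?thesis using sq[of i k] by simp
    qed
    with h show "social_balance X" by (simp add: social_balance_def s_def)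
  qed
  have B: "social_balance X \<longrightarrow> sign_mat X = transpose (sign_mat X)"
  proof
    assume "social_balance X"
    then have "s i j = s j i" for i j using F by blast
    then show "sign_mat X = transpose (sign_mat X)"
      by (simp add: vec_eq_iff transpose_def s_def)
  qed
  from A B show ?thesis by blast
qed

end
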